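(* Let $A\in\mathbb{R}^{m\times n}$ with $m>n$, and let $A=U_A\Sigma_AV_A^T$ be its economy SVD, $U_A\in\mathbb{R}^{m\times n}$ with orthonormal columns. Let $\lambda>0$. Let $X\in\mathbb{R}^{s\times m}$ with $m>s\geq n$ be a matrix such that, for some $0<\epsilon<1$, $$1-\epsilon<\sigma_{\min}(XU_A)\le\sigma_{\max}(XU_A)<1+\epsilon .$$ Suppose $R\in\mathbb{R}^{n\times n}$ is an upper triangular matrix such that $R^TR=A^TX^TXA+\lambda I_n$. Then $$\kappa_2(BR^{-1})\le\frac{1+\epsilon}{1-\epsilon},\qquad\text{where } B=\begin{bmatrix}A\\ \sqrt{\lambda}I_n\end{bmatrix}\in\mathbb{R}^{(m+n)\times n}.$$
   Context: $\sigma_{\min},\sigma_{\max}$ denote the smallest and largest singular values (of an $s\times n$ matrix, among its $n$ singular values), and $\kappa_2(M)=\sigma_{\max}(M)/\sigma_{\min}(M)$ is the spectral condition number of a full-column-rank matrix $M$. Note $R$ is invertible since $R^TR$ is positive definite. *)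

theory Defs
  imports "HOL-Analysis.Analysis"
begin

definition gram_eigenvalues :: "real^'n^'s \<Rightarrow> real set" where
  "gram_eigenvalues M = {\<mu>. \<exists>v. v \<noteq> 0 \<and> (transpose M ** M) *v v = \<mu> *\<^sub>R v}"

definition singular_values :: "real^'n^'s \<Rightarrow> real set" where
  "singular_values M = sqrt ` gram_eigenvalues M"

definition sigma_min :: "real^'n^'s \<Rightarrow> real" where
  "sigma_min M = Min (singular_values M)"

definition sigma_max :: "real^'n^'s \<Rightarrow> real" where
  "sigma_max M = Max (singular_values M)"

definition kappa2 :: "real^'n^'s \<Rightarrow> real" where
  "kappa2 M = sigma_max M / sigma_min M"

definition upper_triangular :: "((real, 'k::{finite,wellorder}) vec, 'k) vec \<Rightarrow> bool" where
  "upper_triangular R \<longleftrightarrow> (\<forall>i j. j < i \<longrightarrow> R $ i $ j = 0)"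

definition is_diagonal :: "real^'n^'n \<Rightarrow> bool" where
  "is_diagonal D \<longleftrightarrow> (\<forall>i j. i \<noteq> j \<longrightarrow> D $ i $ j = 0)"

definition stack_reg :: "real^'n^'m \<Rightarrow> real \<Rightarrow> real^'n^('m + 'n)" where
  "stack_reg A lam = (\<chi> i j. case i of Inl k \<Rightarrow> A $ k $ j
                                 | Inr k \<Rightarrow> (if k = j then sqrt lam else 0))"

end

theory Submission imports Defs begin

lemma quad_zero:
  fixes a b :: real
  assumes "\<forall>t. a*t + b*t^2 \<le> 0"
  shows "a = 0"
proof -
  define c where "c = \<bar>b\<bar> + 1"
  define t where "t = a / c"
  have p: "c > 0" unfolding c_def by simp
  have "a*t + b*t^2 \<le> 0" using assms by blast
  hence "(a*t + b*t^2) * c^2 \<le> 0" by (simp add: mult_nonpos_nonneg)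
  moreover have "(a*t + b*t^2) * c^2 = a^2 * (c + b)"
    using p unfolding t_def by (simp add: field_simps power2_eq_square)
  ultimately have "a^2 * (c + b) \<le> 0" by simp
  moreover have "c + b \<ge> 1" unfolding c_def by linarith
  ultimately have "a^2 \<le> 0"
    by (smt (verit) mult_le_cancel_left1 zero_le_power2)
  thus ?thesis by simp
qed

lemma quad_form:
  fixes M :: "real^'n^'k"
  shows "(M *v x) \<bullet> (M *v x) = x \<bullet> ((transpose M ** M) *v x)"
  by (metis dot_lmul_matrix inner_commute matrix_vector_mul_assoc transpose_matrix_vector)

lemma sym_inner:
  fixes G :: "real^'n^'n"
  assumes "transpose G = G"
  shows "x \<bullet> (G *v y) = y \<bullet> (G *v x)"
  by (metis assms dot_lmul_matrix inner_commute transpose_matrix_vector)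

lemma sym_max_eig:
  fixes G :: "real^'n^'n"
  assumes sym: "transpose G = G"
  shows "\<exists>v. norm v = 1 \<and> G *v v = (v \<bullet> (G *v v)) *\<^sub>R v \<and>
             (\<forall>x. x \<bullet> (G *v x) \<le> (v \<bullet> (G *v v)) * (x \<bullet> x))"
proof -
  define q where "q x = x \<bullet> (G *v x)" for x
  have cont: "continuous_on (sphere 0 1) q"
    unfolding q_def by (intro continuous_on_inner continuous_on_id
        linear_continuous_on matrix_vector_mul_bounded_linear)
  have ne: "sphere (0::real^'n) 1 \<noteq> {}" by simp
  obtain v where v: "v \<in> sphere 0 1" and vmax: "\<And>y. y \<in> sphere 0 1 \<Longrightarrow> q y \<le> q v"
    using continuous_attains_sup[OF compact_sphere ne cont] by blast
  have nv: "norm v = 1" using v by simp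
  have vv: "v \<bullet> v = 1" using nv by (simp add: dot_square_norm)
  define lam where "lam = q v"
  have scal: "q (c *\<^sub>R x) = c^2 * q x" for c x
    unfolding q_def by (simp add: matrix_vector_mult_scaleR power2_eq_square)
  have bound: "q x \<le> lam * (x \<bullet> x)" for x
  proof (cases "x = 0")
    case True thus ?thesis by (simp add: q_def)
  next
    case False
    hence n: "norm x > 0" by simp
    have "(1 / norm x) *\<^sub>R x \<in> sphere 0 1" using n by simp
    hence "q ((1 / norm x) *\<^sub>R x) \<le> lam" using vmax lam_def by blast
    hence "q x / (norm x)^2 \<le> lam" by (simp add: scal power_divide)
    hence "q x \<le> lam * (norm x)^2" using n by (simp add: divide_le_eq)
    thus ?thesis by (simp add: dot_square_norm)
  qed
  have "G *v v = lam *\<^sub>R v"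
  proof -
    define w where "w = G *v v - lam *\<^sub>R v"
    have "\<forall>t. (2 * (w \<bullet> (G *v v) - lam * (v \<bullet> w))) * t + (q w - lam * (w \<bullet> w)) * t^2 \<le> 0"
    proof
      fix t :: real
      have h1: "q (v + t *\<^sub>R w) \<le> lam * ((v + t *\<^sub>R w) \<bullet> (v + t *\<^sub>R w))" by (rule bound)
      have h2: "q (v + t *\<^sub>R w) = q v + 2 * t * (w \<bullet> (G *v v)) + t^2 * q w"
        unfolding q_def using sym_inner[OF sym, of v w]
        by (simp add: matrix_vector_right_distrib matrix_vector_mult_scaleR inner_add_left
            inner_add_right power2_eq_square algebra_simps)
      have h3: "(v + t *\<^sub>R w) \<bullet> (v + t *\<^sub>R w) = 1 + 2 * t * (v \<bullet> w) + t^2 * (w \<bullet> w)"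
        using vv by (simp add: inner_add_left inner_add_right power2_eq_square algebra_simps inner_commute)
      have h: "q v + 2 * t * (w \<bullet> (G *v v)) + t^2 * q w \<le> lam * (1 + 2 * t * (v \<bullet> w) + t^2 * (w \<bullet> w))"
        using h1 unfolding h2 h3 .
      show "(2 * (w \<bullet> (G *v v) - lam * (v \<bullet> w))) * t + (q w - lam * (w \<bullet> w)) * t^2 \<le> 0"
        using h unfolding lam_def by (simp add: algebra_simps)
    qed
    hence "2 * (w \<bullet> (G *v v) - lam * (v \<bullet> w)) = 0" by (rule quad_zero)
    hence "w \<bullet> w = 0" unfolding w_def by (simp add: inner_diff_left inner_diff_right algebra_simps inner_commute)
    thus ?thesis unfolding w_def by simp
  qed
  thus ?thesis using nv bound unfolding lam_def q_def by blast
qed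


lemma sym_min_eig:
  fixes G :: "real^'n^'n"
  assumes sym: "transpose G = G"
  shows "\<exists>v. norm v = 1 \<and> G *v v = (v \<bullet> (G *v v)) *\<^sub>R v \<and>
             (\<forall>x. (v \<bullet> (G *v v)) * (x \<bullet> x) \<le> x \<bullet> (G *v x))"
proof -
  have "transpose (- G) = - G" using sym by (simp add: transpose_def vec_eq_iff)
  from sym_max_eig[OF this] obtain v where v: "norm v = 1" "(- G) *v v = (v \<bullet> ((- G) *v v)) *\<^sub>R v"
    "\<forall>x. x \<bullet> ((- G) *v x) \<le> (v \<bullet> ((- G) *v v)) * (x \<bullet> x)" by blast
  have neg: "(- G) *v x = - (G *v x)" for x by (simp add: matrix_vector_mult_def vec_eq_iff sum_negf)
  have a: "G *v v = (v \<bullet> (G *v v)) *\<^sub>R v"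
  proof -
    have "- (G *v v) = (- (v \<bullet> (G *v v))) *\<^sub>R v" using v(2) unfolding neg by simp
    hence "- (G *v v) = - ((v \<bullet> (G *v v)) *\<^sub>R v)" by simp
    thus ?thesis by (metis minus_equation_iff)
  qed
  have b: "(v \<bullet> (G *v v)) * (x \<bullet> x) \<le> x \<bullet> (G *v x)" for x
  proof -
    have "x \<bullet> (- (G *v x)) \<le> (v \<bullet> (- (G *v v))) * (x \<bullet> x)" using v(3) unfolding neg by blast
    thus ?thesis by simp
  qed
  show ?thesis using v(1) a b by blast
qed

lemma eig_finite:
  fixes G :: "real^'n^'n"
  assumes sym: "transpose G = G"
  shows "finite {\<mu>. \<exists>v. v \<noteq> 0 \<and> G *v v = \<mu> *\<^sub>R v}"
proof -
  define E where "E = {\<mu>. \<exists>v. v \<noteq> 0 \<and> G *v v = \<mu> *\<^sub>R v}"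
  define f where "f \<mu> = (SOME v. v \<noteq> 0 \<and> G *v v = \<mu> *\<^sub>R v)" for \<mu>
  have fE: "f \<mu> \<noteq> 0 \<and> G *v f \<mu> = \<mu> *\<^sub>R f \<mu>" if "\<mu> \<in> E" for \<mu>
    using that unfolding E_def f_def mem_Collect_eq by (rule someI_ex)
  have inj: "inj_on f E"
  proof (rule inj_onI)
    fix a b assume a: "a \<in> E" and b: "b \<in> E" and eq: "f a = f b"
    have "a *\<^sub>R f a = b *\<^sub>R f a" using fE[OF a] fE[OF b] eq by metis
    hence "(a - b) *\<^sub>R f a = 0" by (simp add: scaleR_diff_left)
    thus "a = b" using fE[OF a] by simp
  qed
  have po0: "f a \<bullet> f b = 0" if a: "a \<in> E" and b: "b \<in> E" and ne: "f a \<noteq> f b" for a b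
  proof -
    have ab: "a \<noteq> b" using ne by auto
    have "a * (f a \<bullet> f b) = (G *v f a) \<bullet> f b" using fE[OF a] by simp
    also have "\<dots> = f b \<bullet> (G *v f a)" by (simp add: inner_commute)
    also have "\<dots> = f a \<bullet> (G *v f b)" by (rule sym_inner[OF sym])
    also have "\<dots> = b * (f a \<bullet> f b)" using fE[OF b] by simp
    finally have "(a - b) * (f a \<bullet> f b) = 0" by (simp add: algebra_simps)
    thus "f a \<bullet> f b = 0" using ab by (simp only: mult_eq_0_iff) simp
  qed
  have po: "pairwise orthogonal (f ` E)"
    unfolding pairwise_def orthogonal_def using po0 by blast
  have "0 \<notin> f ` E" using fE by auto
  hence "independent (f ` E)" using pairwise_orthogonal_independent po by blast
  hence "finite (f ` E)" using independent_bound by blast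
  hence "finite E" using finite_imageD inj by blast
  thus ?thesis unfolding E_def .
qed

lemma gram_sym: "transpose (transpose M ** M) = transpose M ** (M :: real^'n^'s)"
  by (simp add: matrix_transpose_mul)

lemma gram_bounds:
  fixes M :: "real^'n^'s"
  shows "finite (singular_values M)" "singular_values M \<noteq> {}"
    "\<forall>x. (sigma_min M)^2 * (x \<bullet> x) \<le> (M *v x) \<bullet> (M *v x)"
    "\<forall>x. (M *v x) \<bullet> (M *v x) \<le> (sigma_max M)^2 * (x \<bullet> x)"
    "sigma_min M \<ge> 0"
proof -
  let ?G = "transpose M ** M"
  have fin: "finite (gram_eigenvalues M)"
    unfolding gram_eigenvalues_def using eig_finite[OF gram_sym] .
  thus f1: "finite (singular_values M)" unfolding singular_values_def by (rule finite_imageI)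
  have nonneg: "\<mu> \<ge> 0" if "\<mu> \<in> gram_eigenvalues M" for \<mu>
  proof -
    have "\<exists>v. v \<noteq> 0 \<and> ?G *v v = \<mu> *\<^sub>R v" using that unfolding gram_eigenvalues_def mem_Collect_eq .
    then obtain v where v: "v \<noteq> 0" "?G *v v = \<mu> *\<^sub>R v" by (elim exE conjE)
    have "(M *v v) \<bullet> (M *v v) = v \<bullet> (?G *v v)" by (rule quad_form)
    also have "\<dots> = v \<bullet> (\<mu> *\<^sub>R v)" by (simp only: v(2))
    also have "\<dots> = \<mu> * (v \<bullet> v)" by (rule inner_scaleR_right)
    finally have "0 \<le> \<mu> * (v \<bullet> v)" using inner_ge_zero[of "M *v v"] by linarith
    moreover have "v \<bullet> v > 0" using v(1) by simp
    ultimately show ?thesis by (simp add: zero_le_mult_iff)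
  qed
  obtain v0 where v0: "norm v0 = 1" "?G *v v0 = (v0 \<bullet> (?G *v v0)) *\<^sub>R v0"
      "\<forall>x. (v0 \<bullet> (?G *v v0)) * (x \<bullet> x) \<le> x \<bullet> (?G *v x)"
    using sym_min_eig[OF gram_sym] by blast
  obtain v1 where v1: "norm v1 = 1" "?G *v v1 = (v1 \<bullet> (?G *v v1)) *\<^sub>R v1"
      "\<forall>x. x \<bullet> (?G *v x) \<le> (v1 \<bullet> (?G *v v1)) * (x \<bullet> x)"
    using sym_max_eig[OF gram_sym] by blast
  define l0 where "l0 = v0 \<bullet> (?G *v v0)"
  define l1 where "l1 = v1 \<bullet> (?G *v v1)"
  have e0: "l0 \<in> gram_eigenvalues M" unfolding gram_eigenvalues_def l0_def using v0
    by (intro CollectI exI[of _ v0]) auto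
  have e1: "l1 \<in> gram_eigenvalues M" unfolding gram_eigenvalues_def l1_def using v1
    by (intro CollectI exI[of _ v1]) auto
  have s0: "sqrt l0 \<in> singular_values M" using e0 unfolding singular_values_def by blast
  have s1: "sqrt l1 \<in> singular_values M" using e1 unfolding singular_values_def by blast
  thus "singular_values M \<noteq> {}" by blast
  have mn: "sigma_min M \<le> sqrt l0" unfolding sigma_min_def using f1 s0 by simp
  have mx: "sqrt l1 \<le> sigma_max M" unfolding sigma_max_def using f1 s1 by simp
  have "sigma_min M \<in> singular_values M" unfolding sigma_min_def using f1 s0 Min_in by blast
  thus smin: "sigma_min M \<ge> 0" unfolding singular_values_def using nonneg by auto
  have l0n: "l0 \<ge> 0" using nonneg e0 by blast
  have l1n: "l1 \<ge> 0" using nonneg e1 by blast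
  have "(sigma_min M)^2 \<le> (sqrt l0)^2" using mn smin by (simp add: power_mono)
  hence A: "(sigma_min M)^2 \<le> l0" using l0n by simp
  have "(sqrt l1)^2 \<le> (sigma_max M)^2" using mx l1n by (intro power_mono) auto
  hence B: "l1 \<le> (sigma_max M)^2" using l1n by simp
  show "\<forall>x. (sigma_min M)^2 * (x \<bullet> x) \<le> (M *v x) \<bullet> (M *v x)"
  proof
    fix x :: "real^'n"
    have "(sigma_min M)^2 * (x \<bullet> x) \<le> l0 * (x \<bullet> x)" using A by (simp add: mult_right_mono)
    also have "\<dots> \<le> x \<bullet> (?G *v x)" using v0(3) l0_def by blast
    finally show "(sigma_min M)^2 * (x \<bullet> x) \<le> (M *v x) \<bullet> (M *v x)" by (simp add: quad_form)
  qed
  show "\<forall>x. (M *v x) \<bullet> (M *v x) \<le> (sigma_max M)^2 * (x \<bullet> x)"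
  proof
    fix x :: "real^'n"
    have "(M *v x) \<bullet> (M *v x) = x \<bullet> (?G *v x)" by (simp add: quad_form)
    also have "\<dots> \<le> l1 * (x \<bullet> x)" using v1(3) l1_def by blast
    also have "\<dots> \<le> (sigma_max M)^2 * (x \<bullet> x)" using B by (simp add: mult_right_mono)
    finally show "(M *v x) \<bullet> (M *v x) \<le> (sigma_max M)^2 * (x \<bullet> x)" .
  qed
qed


lemma if_mult0: "(if P then a else 0) * (b::real) = (if P then a*b else 0)" by simp

lemma add_scal_mv:
  fixes M :: "real^'n^'n"
  shows "(M + c *\<^sub>R mat 1) *v y = M *v y + c *\<^sub>R y"
proof -
  have "(M + c *\<^sub>R mat 1) *v y = M *v y + (c *\<^sub>R mat 1) *v y"
    by (simp add: matrix_vector_mult_def vec_eq_iff sum.distrib algebra_simps)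
  also have "(c *\<^sub>R mat 1) *v y = c *\<^sub>R y"
    by (metis scaleR_matrix_vector_assoc matrix_vector_mul_lid)
  finally show ?thesis .
qed

lemma stack_norm:
  fixes A :: "real^'n^'m" assumes lam: "lam \<ge> 0"
  shows "(stack_reg A lam *v y) \<bullet> (stack_reg A lam *v y) = (A *v y) \<bullet> (A *v y) + lam * (y \<bullet> y)"
proof -
  let ?w = "stack_reg A lam *v y"
  have l: "?w $ Inl k = (A *v y) $ k" for k
    by (simp add: stack_reg_def matrix_vector_mult_def)
  have r: "?w $ Inr k = sqrt lam * y $ k" for k
    by (simp add: stack_reg_def matrix_vector_mult_def if_mult0)
  have "?w \<bullet> ?w = (\<Sum>i\<in>UNIV <+> UNIV. ?w $ i * ?w $ i)"
    unfolding inner_vec_def UNIV_Plus_UNIV by simp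
  also have "\<dots> = (\<Sum>k\<in>UNIV. (A *v y) $ k * (A *v y) $ k) + (\<Sum>k\<in>UNIV. (sqrt lam * y $ k) * (sqrt lam * y $ k))"
    by (subst sum.Plus) (auto simp: l r comp_def)
  also have "\<dots> = (A *v y) \<bullet> (A *v y) + lam * (y \<bullet> y)"
  proof -
    have s: "sqrt lam * sqrt lam = lam" using lam by simp
    have "sqrt lam * y $ k * (sqrt lam * y $ k) = (sqrt lam * sqrt lam) * (y $ k * y $ k)" for k
      by (simp only: mult_ac)
    hence e: "sqrt lam * y $ k * (sqrt lam * y $ k) = lam * (y $ k * y $ k)" for k
      unfolding s .
    show ?thesis unfolding e by (simp add: inner_vec_def sum_distrib_left)
  qed
  finally show ?thesis .
qed

lemma arith1:
  fixes p a b L \<mu> :: real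
  assumes "0 < p" "p \<le> 1" "p*a \<le> b" "L > 0" "\<mu>*(b+L) = a+L" "a \<ge> 0"
  shows "\<mu>*p \<le> 1"
proof -
  have "p*a \<ge> 0" using assms by simp
  hence bL: "b + L > 0" using assms by linarith
  have pl: "p*L \<le> 1*L" using assms by (intro mult_right_mono) auto
  have "\<mu>*p*(b+L) = p*(\<mu>*(b+L))" by (simp add: algebra_simps)
  also have "\<dots> = p*a + p*L" using assms(5) by (simp add: distrib_left)
  also have "\<dots> \<le> b + L" using assms(3) pl by linarith
  finally have "\<mu>*p*(b+L) \<le> 1 * (b+L)" by simp
  thus ?thesis using bL by (simp only: mult_le_cancel_right)
qed

lemma arith2:
  fixes Q a b L \<mu> :: real
  assumes "Q \<ge> 1" "b \<le> Q*a" "L > 0" "\<mu>*(b+L) = a+L" "b \<ge> 0"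
  shows "\<mu>*Q \<ge> 1"
proof -
  have bL: "b + L > 0" using assms by simp
  have ql: "Q*L \<ge> 1*L" using assms by (intro mult_right_mono) auto
  have "b + L \<le> Q*a + Q*L" using assms(2) ql by linarith
  also have "\<dots> = Q*(\<mu>*(b+L))" using assms(4) by (simp add: distrib_left)
  also have "\<dots> = \<mu>*Q*(b+L)" by (simp add: algebra_simps)
  finally have "\<mu>*Q*(b+L) \<ge> 1 * (b+L)" by simp
  thus ?thesis using bL by (simp only: mult_le_cancel_right)
qed


theorem lemma2p1:
  fixes A :: "((real, 'n::{finite,wellorder}) vec, 'm::finite) vec"
    and U :: "((real, 'n) vec, 'm) vec"
    and S :: "((real, 'n) vec, 'n) vec" and V :: "((real, 'n) vec, 'n) vec"
    and X :: "((real, 'm) vec, 's::finite) vec" and R :: "((real, 'n) vec, 'n) vec"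
    and lam eps :: real
  assumes "CARD('m) > CARD('s)" and "CARD('s) \<ge> CARD('n)"
    and "transpose U ** U = mat 1"
    and "is_diagonal S" and "\<forall>i. S $ i $ i \<ge> 0"
    and "orthogonal_matrix V"
    and "A = U ** S ** transpose V"
    and "lam > 0"
    and "0 < eps" and "eps < 1"
    and "1 - eps < sigma_min (X ** U)"
    and "sigma_min (X ** U) \<le> sigma_max (X ** U)"
    and "sigma_max (X ** U) < 1 + eps"
    and "upper_triangular R"
    and "transpose R ** R = transpose A ** transpose X ** X ** A + lam *\<^sub>R mat 1"
  shows "kappa2 (stack_reg A lam ** matrix_inv R) \<le> (1 + eps) / (1 - eps)"
proof -
  note UU = assms(3) and AUSV = assms(7) and lam = assms(8) and e0 = assms(9) and e1 = assms(10)
  note smin = assms(11) and smm = assms(12) and smax = assms(13) and RR = assms(15)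
  let ?B = "stack_reg A lam"
  let ?Ri = "matrix_inv R"
  let ?C = "?B ** ?Ri"
  let ?XU = "X ** U"
  have me: "1 - eps > 0" using e1 by simp
  have pe: "1 + eps > 0" using e0 by simp
  have s2: "(1-eps)^2 \<le> (sigma_min ?XU)^2" using smin me by (intro power_mono) auto
  have s3: "(sigma_max ?XU)^2 \<le> (1+eps)^2" using smax smin smm me by (intro power_mono) auto
  have zb: "(1-eps)^2*(z \<bullet> z) \<le> (?XU *v z) \<bullet> (?XU *v z) \<and> (?XU *v z) \<bullet> (?XU *v z) \<le> (1+eps)^2*(z \<bullet> z)" for z
  proof
    have "(1-eps)^2*(z \<bullet> z) \<le> (sigma_min ?XU)^2*(z \<bullet> z)" using s2 by (intro mult_right_mono) auto
    also have "\<dots> \<le> (?XU *v z) \<bullet> (?XU *v z)" using gram_bounds(3)[of ?XU] by blast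
    finally show "(1-eps)^2*(z \<bullet> z) \<le> (?XU *v z) \<bullet> (?XU *v z)" .
    have "(?XU *v z) \<bullet> (?XU *v z) \<le> (sigma_max ?XU)^2*(z \<bullet> z)" using gram_bounds(4)[of ?XU] by blast
    also have "\<dots> \<le> (1+eps)^2*(z \<bullet> z)" using s3 by (intro mult_right_mono) auto
    finally show "(?XU *v z) \<bullet> (?XU *v z) \<le> (1+eps)^2*(z \<bullet> z)" .
  qed
  have XA: "transpose A ** transpose X ** X ** A = transpose (X ** A) ** (X ** A)"
    by (simp add: matrix_transpose_mul matrix_mul_assoc)
  have Rpd: "(R *v y) \<bullet> (R *v y) = ((X ** A) *v y) \<bullet> ((X ** A) *v y) + lam*(y \<bullet> y)" for y
  proof -
    have "(R *v y) \<bullet> (R *v y) = y \<bullet> ((transpose R ** R) *v y)" by (rule quad_form)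
    also have "\<dots> = y \<bullet> ((transpose (X ** A) ** (X ** A)) *v y) + lam*(y \<bullet> y)"
      unfolding RR XA add_scal_mv by (simp add: inner_add_right)
    also have "y \<bullet> ((transpose (X ** A) ** (X ** A)) *v y) = ((X ** A) *v y) \<bullet> ((X ** A) *v y)"
      by (rule quad_form[symmetric])
    finally show ?thesis .
  qed
  have Rinj: "y = 0" if "R *v y = 0" for y
  proof -
    have "0 = ((X ** A) *v y) \<bullet> ((X ** A) *v y) + lam*(y \<bullet> y)" using Rpd[of y] that by simp
    moreover have "((X ** A) *v y) \<bullet> ((X ** A) *v y) \<ge> 0" by simp
    moreover have "y \<bullet> y \<ge> 0" by simp
    ultimately have "lam*(y \<bullet> y) = 0" using lam by (smt (verit) mult_nonneg_nonneg)
    thus ?thesis using lam by simp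
  qed
  have "\<exists>B'. B' ** R = mat 1" using Rinj matrix_left_invertible_ker by blast
  hence inv: "invertible R" using invertible_left_inverse by blast
  have RRi: "R ** ?Ri = mat 1"
    using inv unfolding invertible_def matrix_inv_def by (rule someI2_ex) blast
  have RRix: "R *v (?Ri *v x) = x" for x using RRi by (simp add: matrix_vector_mul_assoc)
  have eigb: "inverse ((1+eps)^2) \<le> \<mu> \<and> \<mu> \<le> inverse ((1-eps)^2)" if "\<mu> \<in> gram_eigenvalues ?C" for \<mu>
  proof -
    have "\<exists>x. x \<noteq> 0 \<and> (transpose ?C ** ?C) *v x = \<mu> *\<^sub>R x"
      using that unfolding gram_eigenvalues_def mem_Collect_eq .
    then obtain x where x0: "x \<noteq> 0" and xe: "(transpose ?C ** ?C) *v x = \<mu> *\<^sub>R x" by (elim exE conjE)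
    define y where "y = ?Ri *v x"
    define z where "z = (S ** transpose V) *v y"
    have xy: "x = R *v y" unfolding y_def by (simp add: RRix)
    have y0: "y \<noteq> 0" using x0 xy by auto
    have Ay: "A *v y = U *v z" unfolding z_def AUSV by (simp add: matrix_vector_mul_assoc matrix_mul_assoc)
    have XAy: "(X ** A) *v y = ?XU *v z"
      by (simp add: Ay matrix_vector_mul_assoc[symmetric])
    have Uz: "(U *v z) \<bullet> (U *v z) = z \<bullet> z" using quad_form[of U z] UU by simp
    define a where "a = z \<bullet> z"
    define b where "b = (?XU *v z) \<bullet> (?XU *v z)"
    define c where "c = y \<bullet> y"
    have c0: "c > 0" using y0 unfolding c_def by simp
    have "\<mu> * (x \<bullet> x) = x \<bullet> ((transpose ?C ** ?C) *v x)" using xe by simp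
    also have "\<dots> = (?C *v x) \<bullet> (?C *v x)" by (rule quad_form[symmetric])
    also have "?C *v x = ?B *v y" unfolding y_def by (simp add: matrix_vector_mul_assoc)
    also have "(?B *v y) \<bullet> (?B *v y) = a + lam * c"
      unfolding a_def c_def using stack_norm[of lam A y] lam Ay Uz by simp
    finally have h1: "\<mu> * (x \<bullet> x) = a + lam * c" .
    have h2: "x \<bullet> x = b + lam * c" unfolding xy Rpd b_def c_def XAy ..
    have eq: "\<mu> * (b + lam*c) = a + lam*c" using h1 h2 by simp
    have lc: "lam * c > 0" using lam c0 by simp
    have a0: "a \<ge> 0" unfolding a_def by simp
    have b0: "b \<ge> 0" unfolding b_def by simp
    have ab1: "(1-eps)^2 * a \<le> b" using zb[of z] unfolding a_def b_def by blast
    have ab2: "b \<le> (1+eps)^2 * a" using zb[of z] unfolding a_def b_def by blast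
    have p0: "(1-eps)^2 > 0" using me by simp
    have p1: "(1-eps)^2 \<le> 1" using me e0 by (intro power_le_one) auto
    have q1: "(1+eps)^2 \<ge> 1" using e0 by (intro one_le_power) auto
    have u: "\<mu> * (1-eps)^2 \<le> 1" by (rule arith1[OF p0 p1 ab1 lc eq a0])
    have l: "\<mu> * (1+eps)^2 \<ge> 1" by (rule arith2[OF q1 ab2 lc eq b0])
    have "\<mu> \<le> inverse ((1-eps)^2)" using u p0 by (simp add: field_simps)
    moreover have "inverse ((1+eps)^2) \<le> \<mu>"
    proof -
      have qp: "(1+eps)^2 > 0" using pe by simp
      show ?thesis using l qp by (simp add: divide_le_eq inverse_eq_divide)
    qed
    ultimately show ?thesis by simp
  qed
  let ?SV = "singular_values ?C"
  have svb: "inverse (1+eps) \<le> s \<and> s \<le> inverse (1-eps)" if sin: "s \<in> ?SV" for s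
  proof -
    obtain \<mu> where mu: "\<mu> \<in> gram_eigenvalues ?C" and s: "s = sqrt \<mu>"
      using sin unfolding singular_values_def by blast
    have b: "inverse ((1+eps)^2) \<le> \<mu>" "\<mu> \<le> inverse ((1-eps)^2)" using eigb[OF mu] by auto
    have "sqrt (inverse ((1+eps)^2)) \<le> sqrt \<mu>" using b(1) by (rule real_sqrt_le_mono)
    moreover have "sqrt (inverse ((1+eps)^2)) = inverse (1+eps)" using pe
      by (simp add: real_sqrt_inverse)
    moreover have "sqrt \<mu> \<le> sqrt (inverse ((1-eps)^2))" using b(2) by (rule real_sqrt_le_mono)
    moreover have "sqrt (inverse ((1-eps)^2)) = inverse (1-eps)" using me
      by (simp add: real_sqrt_inverse)
    ultimately show ?thesis using s by simp
  qed
  have fin: "finite ?SV" and ne: "?SV \<noteq> {}" using gram_bounds(1,2) by blast+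
  have mx: "sigma_max ?C \<le> inverse (1-eps)" unfolding sigma_max_def using fin ne svb by simp
  have mn: "inverse (1+eps) \<le> sigma_min ?C" unfolding sigma_min_def using fin ne svb by simp
  have ip: "inverse (1+eps) > 0" using pe by simp
  obtain s0 where s0: "s0 \<in> ?SV" using ne by blast
  have "s0 \<le> sigma_max ?C" unfolding sigma_max_def using fin s0 by simp
  hence mxp: "sigma_max ?C \<ge> 0" using svb[OF s0] ip by linarith
  have "kappa2 ?C = sigma_max ?C / sigma_min ?C" unfolding kappa2_def ..
  also have "\<dots> \<le> inverse (1-eps) / inverse (1+eps)"
    using mx mn ip mxp e1 by (intro frac_le) auto
  also have "\<dots> = (1 + eps) / (1 - eps)" by (simp add: field_simps)
  finally show ?thesis .
qed

end
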